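(* A graph $G$ satisfies $\overline{\mu_\alpha}(G)\le 1$ if and only if $G$ is $\{\text{claw}, 2P_3\}$-free.
   Context: All graphs are finite, simple and undirected. For a graph $G$, $\alpha(G)$ is the maximum size of an independent set and $i(G)$ is the minimum size of a maximal (with respect to inclusion) independent set; the independence gap is $\mu_\alpha(G)=\alpha(G)-i(G)$. The hereditary independence gap is $\overline{\mu_\alpha}(G)=\max\{\mu_\alpha(H): H \text{ an induced subgraph of } G\}$. The claw is $K_{1,3}$; $P_3$ is the path on 3 vertices and $2P_3$ is the disjoint union of two copies of $P_3$. For a set $\mathcal F$ of graphs, $G$ is $\mathcal F$-free if no induced subgraph of $G$ is isomorphic to a member of $\mathcal F$. *)

theory Defs
  imports Main
begin

text \<open>A finite simple graph is given by a finite vertex set V and an edge relation E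
  which is symmetric and irreflexive on V. Induced subgraphs are given by subsets S of V
  (with E restricted to S).\<close>

definition simple_graph :: "'a set \<Rightarrow> ('a \<Rightarrow> 'a \<Rightarrow> bool) \<Rightarrow> bool" where
  "simple_graph V E \<longleftrightarrow> finite V \<and> (\<forall>x\<in>V. \<forall>y\<in>V. E x y \<longrightarrow> E y x) \<and> (\<forall>x\<in>V. \<not> E x x)"

definition independent_set :: "'a set \<Rightarrow> ('a \<Rightarrow> 'a \<Rightarrow> bool) \<Rightarrow> 'a set \<Rightarrow> bool" where
  "independent_set V E I \<longleftrightarrow> I \<subseteq> V \<and> (\<forall>x\<in>I. \<forall>y\<in>I. \<not> E x y)"

definition maximal_independent_set :: "'a set \<Rightarrow> ('a \<Rightarrow> 'a \<Rightarrow> bool) \<Rightarrow> 'a set \<Rightarrow> bool" where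
  "maximal_independent_set V E I \<longleftrightarrow> independent_set V E I \<and>
     (\<forall>J. independent_set V E J \<and> I \<subseteq> J \<longrightarrow> J = I)"

definition alpha :: "'a set \<Rightarrow> ('a \<Rightarrow> 'a \<Rightarrow> bool) \<Rightarrow> nat" where
  "alpha V E = Max (card ` {I. independent_set V E I})"

definition indep_domination :: "'a set \<Rightarrow> ('a \<Rightarrow> 'a \<Rightarrow> bool) \<Rightarrow> nat" where
  "indep_domination V E = Min (card ` {I. maximal_independent_set V E I})"

definition indep_gap :: "'a set \<Rightarrow> ('a \<Rightarrow> 'a \<Rightarrow> bool) \<Rightarrow> int" where
  "indep_gap V E = int (alpha V E) - int (indep_domination V E)"

definition hered_indep_gap :: "'a set \<Rightarrow> ('a \<Rightarrow> 'a \<Rightarrow> bool) \<Rightarrow> int" where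
  "hered_indep_gap V E = Max ((\<lambda>S. indep_gap S E) ` Pow V)"

definition has_induced :: "'a set \<Rightarrow> ('a \<Rightarrow> 'a \<Rightarrow> bool) \<Rightarrow> 'b set \<Rightarrow> ('b \<Rightarrow> 'b \<Rightarrow> bool) \<Rightarrow> bool" where
  "has_induced V E W F \<longleftrightarrow> (\<exists>f. inj_on f W \<and> f ` W \<subseteq> V \<and>
      (\<forall>x\<in>W. \<forall>y\<in>W. E (f x) (f y) \<longleftrightarrow> F x y))"

definition claw_V :: "nat set" where "claw_V = {0,1,2,3}"
definition claw_E :: "nat \<Rightarrow> nat \<Rightarrow> bool" where
  "claw_E x y \<longleftrightarrow> (x = 0 \<and> y \<in> {1,2,3}) \<or> (y = 0 \<and> x \<in> {1,2,3})"

definition twoP3_V :: "nat set" where "twoP3_V = {0,1,2,3,4,5}"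
definition twoP3_E :: "nat \<Rightarrow> nat \<Rightarrow> bool" where
  "twoP3_E x y \<longleftrightarrow> {x,y} \<in> {{0,1},{1,2},{3,4},{4,5}}"

end

theory Submission imports Defs begin

lemma claw_found:
  assumes sg: "simple_graph S E" and "u\<in>S" "a\<in>S" "b\<in>S" "c\<in>S"
    "E u a" "E u b" "E u c" "a\<noteq>b" "a\<noteq>c" "b\<noteq>c" "\<not>E a b" "\<not>E a c" "\<not>E b c"
  shows "has_induced S E claw_V claw_E"
proof -
  have sym: "\<And>x y. x\<in>S \<Longrightarrow> y\<in>S \<Longrightarrow> E x y \<Longrightarrow> E y x" and irr: "\<And>x. x\<in>S \<Longrightarrow> \<not>E x x"
    using sg unfolding simple_graph_def by blast+
  have f: "E a u" "E b u" "E c u" "\<not>E b a" "\<not>E c a" "\<not>E c b" "\<not> E u u" "\<not> E a a" "\<not> E b b" "\<not> E c c"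
    using assms sym irr by blast+
  have d: "u\<noteq>a" "u\<noteq>b" "u\<noteq>c" using assms f by metis+
  show ?thesis unfolding has_induced_def claw_V_def claw_E_def
    apply (rule exI[of _ "\<lambda>n. [u,a,b,c] ! n"])
    using assms f d by (auto simp: eval_nat_numeral)
qed

lemma p3_found:
  assumes sg: "simple_graph S E" and "u\<in>S" "a\<in>S" "b\<in>S" "v\<in>S" "c\<in>S" "d\<in>S"
    "E u a" "E u b" "E v c" "E v d"
    "a\<noteq>b" "a\<noteq>c" "a\<noteq>d" "b\<noteq>c" "b\<noteq>d" "c\<noteq>d" "u\<noteq>v"
    "u\<noteq>c" "u\<noteq>d" "v\<noteq>a" "v\<noteq>b"
    "\<not>E a b" "\<not>E a c" "\<not>E a d" "\<not>E b c" "\<not>E b d" "\<not>E c d" "\<not>E u v"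
    "\<not>E u c" "\<not>E u d" "\<not>E v a" "\<not>E v b"
  shows "has_induced S E twoP3_V twoP3_E"
proof -
  have sym: "\<And>x y. x\<in>S \<Longrightarrow> y\<in>S \<Longrightarrow> E x y \<Longrightarrow> E y x" and irr: "\<And>x. x\<in>S \<Longrightarrow> \<not>E x x"
    using sg unfolding simple_graph_def by blast+
  have f: "E a u" "E b u" "E c v" "E d v" "\<not>E b a" "\<not>E c a" "\<not>E d a" "\<not>E c b" "\<not>E d b" "\<not>E d c"
    "\<not>E v u" "\<not>E c u" "\<not>E d u" "\<not>E a v" "\<not>E b v"
    "\<not> E u u" "\<not> E a a" "\<not> E b b" "\<not> E c c" "\<not> E v v" "\<not> E d d"
    using assms sym irr by blast+
  have dd: "u\<noteq>a" "u\<noteq>b" "v\<noteq>c" "v\<noteq>d" using assms f by metis+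
  show ?thesis unfolding has_induced_def twoP3_V_def twoP3_E_def
    apply (rule exI[of _ "\<lambda>n. [a,u,b,c,v,d] ! n"])
    using assms f dd by (auto simp: eval_nat_numeral doubleton_eq_iff insert_commute)
qed

lemma no_three:
  assumes sg: "simple_graph S E" and nc: "\<not> has_induced S E claw_V claw_E"
    and J: "independent_set S E J" and "u\<in>S" "x\<in>J" "y\<in>J" "z\<in>J" "x\<noteq>y" "x\<noteq>z" "y\<noteq>z"
    "E u x" "E u y" "E u z"
  shows False
  using claw_found[OF sg, of u x y z] assms unfolding independent_set_def by blast

lemma gap_bound:
  assumes sg: "simple_graph S E" and nc: "\<not> has_induced S E claw_V claw_E"
    and np: "\<not> has_induced S E twoP3_V twoP3_E"
    and I: "maximal_independent_set S E I" and J: "independent_set S E J"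
  shows "card J \<le> card I + 1"
proof -
  have sym: "\<And>x y. x\<in>S \<Longrightarrow> y\<in>S \<Longrightarrow> E x y \<Longrightarrow> E y x" and irr: "\<And>x. x\<in>S \<Longrightarrow> \<not>E x x"
    and fS: "finite S"
    using sg unfolding simple_graph_def by blast+
  have IS: "I \<subseteq> S" and Iind: "\<And>x y. x\<in>I \<Longrightarrow> y\<in>I \<Longrightarrow> \<not> E x y"
    and Imax: "\<And>K. independent_set S E K \<Longrightarrow> I \<subseteq> K \<Longrightarrow> K = I"
    using I unfolding maximal_independent_set_def independent_set_def by blast+
  have JS: "J \<subseteq> S" and Jind: "\<And>x y. x\<in>J \<Longrightarrow> y\<in>J \<Longrightarrow> \<not> E x y"
    using J unfolding independent_set_def by blast+
  have fI: "finite I" and fJ: "finite J" using IS JS fS finite_subset by blast+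
  have dom: "\<exists>u. u \<in> I - J \<and> E w u" if w: "w \<in> J - I" for w
  proof -
    have "\<not> independent_set S E (insert w I)"
      using Imax[of "insert w I"] w by blast
    then obtain p q where pq: "p \<in> insert w I" "q \<in> insert w I" "E p q"
      using w JS IS unfolding independent_set_def by blast
    then have "\<exists>u\<in>I. E w u" using Iind irr sym w JS IS by blast
    then obtain u where u: "u \<in> I" "E w u" by blast
    have "u \<notin> J" using Jind u w by blast
    then show ?thesis using u by blast
  qed
  define g where "g w = (SOME u. u \<in> I - J \<and> E w u)" for w
  have g: "g w \<in> I - J" "E w (g w)" "E (g w) w" if "w \<in> J - I" for w
  proof -
    show a: "g w \<in> I - J" "E w (g w)"
      using someI_ex[OF dom[OF that]] unfolding g_def by blast+
    show "E (g w) w" using sym a that IS JS by blast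
  qed
  have three: False if "u \<in> S" "x\<in>J" "y\<in>J" "z\<in>J" "x\<noteq>y" "x\<noteq>z" "y\<noteq>z"
    "E u x" "E u y" "E u z" for u x y z
    using no_three[OF sg nc J] that by blast
  have key: "card (J - I) \<le> card (I - J) + 1"
  proof (cases "inj_on g (J - I)")
    case True
    have "card (J - I) \<le> card (I - J)"
      by (rule card_inj_on_le[OF True]) (use g fI in auto)
    then show ?thesis by simp
  next
    case False
    then obtain a b where ab: "a \<in> J - I" "b \<in> J - I" "a \<noteq> b" "g a = g b"
      unfolding inj_on_def by blast
    define u0 where "u0 = g a"
    have inj: "inj_on g (J - I - {a})"
    proof (rule inj_onI, rule ccontr)
      fix x y assume x: "x \<in> J - I - {a}" and y: "y \<in> J - I - {a}" and gxy: "g x = g y" and xy: "x \<noteq> y"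
      show False
      proof (cases "g x = u0")
        case True
        then show False using three[of u0 a x y] g[of a] g[of x] g[of y] x y xy gxy IS ab
          unfolding u0_def by auto
      next
        case ne: False
        define u where "u = g x"
        have xb: "x \<noteq> b" "y \<noteq> b" using ne gxy ab unfolding u0_def by auto
        have u0S: "u0 \<in> S" "u0 \<in> I" "u0 \<notin> J" using g[of a] ab IS unfolding u0_def by auto
        have uS: "u \<in> S" "u \<in> I" "u \<notin> J" using g[of x] x IS unfolding u_def by auto
        have E1: "E u0 a" "E u0 b" "E u x" "E u y"
          using g[of a] g[of b] g[of x] g[of y] ab x y gxy unfolding u0_def u_def by auto
        have n1: "\<not> E u0 x" using three[of u0 a b x] E1 ab x u0S xb by auto
        have n2: "\<not> E u0 y" using three[of u0 a b y] E1 ab y u0S xb by auto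
        have n3: "\<not> E u a" using three[of u a x y] E1 ab x y uS xy by auto
        have n4: "\<not> E u b" using three[of u b x y] E1 ab x y uS xy xb by auto
        have "has_induced S E twoP3_V twoP3_E"
          apply (rule p3_found[OF sg, of u0 a b u x y])
          using u0S uS E1 n1 n2 n3 n4 ab x y xy xb Jind Iind JS ne
          unfolding u_def by auto
        then show False using np by blast
      qed
    qed
    have "card (J - I - {a}) \<le> card (I - J)"
      by (rule card_inj_on_le[OF inj]) (use g fI in auto)
    moreover have "card (J - I - {a}) = card (J - I) - 1" using ab by (simp add: card_Diff_singleton)
    ultimately show ?thesis by linarith
  qed
  have cJ: "card J = card (J \<inter> I) + card (J - I)"
    using fJ by (metis card_Un_disjoint Int_Diff_Un Int_Diff_disjoint finite_Diff finite_Int)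
  have cI: "card I = card (J \<inter> I) + card (I - J)"
    using fI by (metis card_Un_disjoint Int_Diff_Un Int_Diff_disjoint finite_Diff finite_Int Int_commute)
  show ?thesis using key cJ cI by linarith
qed

lemma fin_indep: "finite S \<Longrightarrow> finite {K. independent_set S E K}"
  unfolding independent_set_def by (rule finite_subset[of _ "Pow S"]) auto

lemma alpha_ge: "finite S \<Longrightarrow> independent_set S E K \<Longrightarrow> card K \<le> alpha S E"
  unfolding alpha_def by (rule Max_ge) (auto intro: fin_indep)

lemma alpha_attained: assumes "finite S" shows "\<exists>J. independent_set S E J \<and> card J = alpha S E"
proof -
  have e: "independent_set S E {}" unfolding independent_set_def by auto
  have ne: "card ` {K. independent_set S E K} \<noteq> {}" using e by auto
  have fi: "finite (card ` {K. independent_set S E K})" using fin_indep[OF assms] by (rule finite_imageI)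
  have "alpha S E \<in> card ` {K. independent_set S E K}"
    unfolding alpha_def using Max_in[OF fi ne] .
  then obtain J where "J \<in> {K. independent_set S E K}" "alpha S E = card J" by (rule imageE)
  then show ?thesis by auto
qed

lemma max_exists: assumes "finite S" shows "\<exists>I. maximal_independent_set S E I"
proof -
  obtain J where J: "independent_set S E J" "card J = alpha S E" using alpha_attained[OF assms] by blast
  have "maximal_independent_set S E J"
    unfolding maximal_independent_set_def
  proof (intro conjI allI impI J(1))
    fix K assume K: "independent_set S E K \<and> J \<subseteq> K"
    have c: "card K \<le> card J" using alpha_ge[OF assms, of E K] K J(2) by simp
    have KS: "K \<subseteq> S" using K unfolding independent_set_def by blast
    have fK: "finite K" using finite_subset[OF KS assms] .
    have "J = K" using card_seteq[OF fK _ c] K by blast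
    then show "K = J" by simp
  qed
  then show ?thesis by blast
qed

lemma fin_max: "finite S \<Longrightarrow> finite {K. maximal_independent_set S E K}"
  unfolding maximal_independent_set_def independent_set_def by (rule finite_subset[of _ "Pow S"]) auto

lemma dom_le: "finite S \<Longrightarrow> maximal_independent_set S E K \<Longrightarrow> indep_domination S E \<le> card K"
  unfolding indep_domination_def by (rule Min_le) (auto intro: fin_max)

lemma dom_attained: assumes "finite S" shows "\<exists>I. maximal_independent_set S E I \<and> card I = indep_domination S E"
proof -
  have "indep_domination S E \<in> card ` {K. maximal_independent_set S E K}"
    unfolding indep_domination_def using fin_max[OF assms, of E] max_exists[OF assms, of E]
    by (intro Min_in finite_imageI) auto
  then obtain J where "J \<in> {K. maximal_independent_set S E K}" "indep_domination S E = card J" by (rule imageE)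
  then show ?thesis by auto
qed

lemma has_induced_mono: assumes "S \<subseteq> V" "has_induced S E W F" shows "has_induced V E W F"
proof -
  obtain f where f: "inj_on f W" "f ` W \<subseteq> S" "\<forall>x\<in>W. \<forall>y\<in>W. E (f x) (f y) \<longleftrightarrow> F x y"
    using assms(2) unfolding has_induced_def by blast
  have "f ` W \<subseteq> V" using f(2) assms(1) by (rule subset_trans)
  then show ?thesis unfolding has_induced_def using f(1,3) by blast
qed

lemma simple_sub: assumes "simple_graph V E" "S \<subseteq> V" shows "simple_graph S E"
proof -
  have "finite S" using finite_subset[OF assms(2)] assms(1) unfolding simple_graph_def by blast
  then show ?thesis using assms unfolding simple_graph_def by blast
qed

lemma gap_le1:
  assumes sg: "simple_graph S E" and nc: "\<not> has_induced S E claw_V claw_E"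
    and np: "\<not> has_induced S E twoP3_V twoP3_E"
  shows "indep_gap S E \<le> 1"
proof -
  have fS: "finite S" using sg unfolding simple_graph_def by blast
  obtain J where J: "independent_set S E J" "card J = alpha S E" using alpha_attained[OF fS] by blast
  obtain I where I: "maximal_independent_set S E I" "card I = indep_domination S E" using dom_attained[OF fS] by blast
  show ?thesis using gap_bound[OF sg nc np I(1) J(1)] I(2) J(2) unfolding indep_gap_def by linarith
qed

lemma claw_E_iff: "claw_E x y \<longleftrightarrow> (x=0\<and>(y=1\<or>y=2\<or>y=3))\<or>(y=0\<and>(x=1\<or>x=2\<or>x=3))"
  unfolding claw_E_def by auto

lemma twoP3_E_iff: "twoP3_E x y \<longleftrightarrow> (x=0\<and>y=1)\<or>(x=1\<and>y=0)\<or>(x=1\<and>y=2)\<or>(x=2\<and>y=1)\<or>(x=3\<and>y=4)\<or>(x=4\<and>y=3)\<or>(x=4\<and>y=5)\<or>(x=5\<and>y=4)"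
  unfolding twoP3_E_def by (auto simp: doubleton_eq_iff)

lemma gap_ge2_claw:
  assumes sg: "simple_graph V E" and h: "has_induced V E claw_V claw_E"
  shows "\<exists>S\<subseteq>V. indep_gap S E \<ge> 2"
proof -
  obtain f where f0: "inj_on f claw_V \<and> f ` claw_V \<subseteq> V \<and> (\<forall>x\<in>claw_V. \<forall>y\<in>claw_V. E (f x) (f y) \<longleftrightarrow> claw_E x y)"
    using h unfolding has_induced_def by (rule exE)
  have f: "inj_on f claw_V" "f ` claw_V \<subseteq> V" "\<And>x y. x\<in>claw_V \<Longrightarrow> y\<in>claw_V \<Longrightarrow> E (f x) (f y) \<longleftrightarrow> claw_E x y"
    using f0 by simp_all
  note fe = inj_on_eq_iff[OF f(1)]
  define S where "S = f ` claw_V"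
  have fS: "finite S" unfolding S_def claw_V_def by auto
  have K: "independent_set S E {f 1, f 2, f 3}"
    unfolding independent_set_def S_def by (simp add: f(3) claw_V_def claw_E_iff)
  have cK: "card {f 1, f 2, f 3} = 3"
    using fe by (simp add: claw_V_def)
  have M: "maximal_independent_set S E {f 0}"
    unfolding maximal_independent_set_def independent_set_def
  proof (intro conjI allI impI)
    show "{f 0} \<subseteq> S" unfolding S_def claw_V_def by auto
    show "\<forall>x\<in>{f 0}. \<forall>y\<in>{f 0}. \<not> E x y" by (simp add: f(3) claw_V_def claw_E_iff)
    fix K assume K: "(K \<subseteq> S \<and> (\<forall>x\<in>K. \<forall>y\<in>K. \<not> E x y)) \<and> {f 0} \<subseteq> K"
    show "K = {f 0}"
    proof (rule ccontr)
      assume "K \<noteq> {f 0}"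
      then obtain z where z: "z \<in> K" "z \<noteq> f 0" using K by blast
      then obtain n where n: "n \<in> claw_V" "z = f n" using K unfolding S_def by blast
      have "n \<noteq> 0" using n(2) z(2) by (cases "n = 0") simp_all
      then have "E (f 0) z" using f(3)[of 0 n] n by (simp add: claw_V_def claw_E_iff)
      then show False using K z by blast
    qed
  qed
  have "3 \<le> alpha S E" using alpha_ge[OF fS K] cK by simp
  moreover have "indep_domination S E \<le> 1" using dom_le[OF fS M] by simp
  ultimately have "indep_gap S E \<ge> 2" unfolding indep_gap_def by linarith
  moreover have "S \<subseteq> V" using f(2) S_def by simp
  ultimately show ?thesis by blast
qed

lemma gap_ge2_p3:
  assumes sg: "simple_graph V E" and h: "has_induced V E twoP3_V twoP3_E"
  shows "\<exists>S\<subseteq>V. indep_gap S E \<ge> 2"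
proof -
  obtain f where f0: "inj_on f twoP3_V \<and> f ` twoP3_V \<subseteq> V \<and> (\<forall>x\<in>twoP3_V. \<forall>y\<in>twoP3_V. E (f x) (f y) \<longleftrightarrow> twoP3_E x y)"
    using h unfolding has_induced_def by (rule exE)
  have f: "inj_on f twoP3_V" "f ` twoP3_V \<subseteq> V" "\<And>x y. x\<in>twoP3_V \<Longrightarrow> y\<in>twoP3_V \<Longrightarrow> E (f x) (f y) \<longleftrightarrow> twoP3_E x y"
    using f0 by simp_all
  note fe = inj_on_eq_iff[OF f(1)]
  define S where "S = f ` twoP3_V"
  have fS: "finite S" unfolding S_def twoP3_V_def by auto
  have K: "independent_set S E {f 0, f 2, f 3, f 5}"
    unfolding independent_set_def S_def by (simp add: f(3) twoP3_V_def twoP3_E_iff)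
  have cK: "card {f 0, f 2, f 3, f 5} = 4"
    using fe by (simp add: twoP3_V_def)
  have cM: "card {f 1, f 4} = 2"
    using fe by (simp add: twoP3_V_def)
  have M: "maximal_independent_set S E {f 1, f 4}"
    unfolding maximal_independent_set_def independent_set_def
  proof (intro conjI allI impI)
    show "{f 1, f 4} \<subseteq> S" unfolding S_def twoP3_V_def by auto
    show "\<forall>x\<in>{f 1, f 4}. \<forall>y\<in>{f 1, f 4}. \<not> E x y"
      by (simp add: f(3) twoP3_V_def twoP3_E_iff)
    fix K assume K: "(K \<subseteq> S \<and> (\<forall>x\<in>K. \<forall>y\<in>K. \<not> E x y)) \<and> {f 1, f 4} \<subseteq> K"
    show "K = {f 1, f 4}"
    proof (rule ccontr)
      assume "K \<noteq> {f 1, f 4}"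
      then obtain z where z: "z \<in> K" "z \<noteq> f 1" "z \<noteq> f 4" using K by blast
      then obtain n where n: "n \<in> twoP3_V" "z = f n" using K unfolding S_def by blast
      have "n \<noteq> 1" using n(2) z(2) by (cases "n = 1") simp_all
      have "n \<noteq> 4" using n(2) z(3) by (cases "n = 4") simp_all
      then have "E (f 1) z \<or> E (f 4) z" using \<open>n \<noteq> 1\<close> using f(3)[of 1 n] f(3)[of 4 n] n
        by (auto simp: twoP3_V_def twoP3_E_iff)
      then show False using K z by blast
    qed
  qed
  have "4 \<le> alpha S E" using alpha_ge[OF fS K] cK by simp
  moreover have "indep_domination S E \<le> 2" using dom_le[OF fS M] cM by simp
  ultimately have "indep_gap S E \<ge> 2" unfolding indep_gap_def by linarith
  moreover have "S \<subseteq> V" using f(2) S_def by simp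
  ultimately show ?thesis by blast
qed

theorem mainTheorem10:
  fixes V :: "'a set" and E :: "'a \<Rightarrow> 'a \<Rightarrow> bool"
  assumes "simple_graph V E"
  shows "hered_indep_gap V E \<le> 1 \<longleftrightarrow>
           \<not> has_induced V E claw_V claw_E \<and> \<not> has_induced V E twoP3_V twoP3_E"
proof -
  have fV: "finite V" using assms unfolding simple_graph_def by blast
  have fin: "finite ((\<lambda>S. indep_gap S E) ` Pow V)" using fV by simp
  have iff: "hered_indep_gap V E \<le> 1 \<longleftrightarrow> (\<forall>S\<subseteq>V. indep_gap S E \<le> 1)"
    unfolding hered_indep_gap_def using fin by (subst Max_le_iff) auto
  show ?thesis
  proof
    assume h: "hered_indep_gap V E \<le> 1"
    have all: "\<And>S. S \<subseteq> V \<Longrightarrow> indep_gap S E \<le> 1" using h iff by blast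
    show "\<not> has_induced V E claw_V claw_E \<and> \<not> has_induced V E twoP3_V twoP3_E"
    proof (intro conjI notI)
      assume c: "has_induced V E claw_V claw_E"
      obtain S where "S \<subseteq> V" "indep_gap S E \<ge> 2" using gap_ge2_claw[OF assms c] by (elim exE conjE)
      then show False using all[of S] by linarith
    next
      assume c: "has_induced V E twoP3_V twoP3_E"
      obtain S where "S \<subseteq> V" "indep_gap S E \<ge> 2" using gap_ge2_p3[OF assms c] by (elim exE conjE)
      then show False using all[of S] by linarith
    qed
  next
    assume h: "\<not> has_induced V E claw_V claw_E \<and> \<not> has_induced V E twoP3_V twoP3_E"
    have "\<forall>S\<subseteq>V. indep_gap S E \<le> 1"
    proof (intro allI impI)
      fix S assume S: "S \<subseteq> V"
      have n1: "\<not> has_induced S E claw_V claw_E" using has_induced_mono[OF S] h by metis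
      have n2: "\<not> has_induced S E twoP3_V twoP3_E" using has_induced_mono[OF S] h by metis
      show "indep_gap S E \<le> 1"
        using gap_le1[OF simple_sub[OF assms S] n1 n2] .
    qed
    then show "hered_indep_gap V E \<le> 1" using iff by blast
  qed
qed

end
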